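(* Let $g\in\mathbb{R}^n$, $\Delta>0$, and $B\in\mathbb{R}^{n\times n}$ (not necessarily symmetric) be positive semidefinite in the sense $h^TBh\ge0$ for all $h\in\mathbb{R}^n$, and let $m(s)=c+\langle g,s\rangle+\frac12\langle s,Bs\rangle$ for a constant $c$. Suppose $t\ge0$ and constants $\lambda_1,\lambda_2>0$ satisfy $\frac12h^TBh+t\|h\|^2\ge\lambda_1\|h\|^2$ for all $h\in\mathbb{R}^n$ and $\|B+tI\|\le\lambda_2$. Let $p\in\mathbb{R}^n$ satisfy $(B+tI)p=-g+r$ with $\|r\|\le\frac{\lambda_1}{2(\lambda_1+\lambda_2)}\|g\|$, and set $s=\min\{\Delta,\|p\|\}\,p/\|p\|$. Then $$m(0)-m(s)\ge\frac{\gamma_1}{2}\|g\|\min\{\Delta,\gamma_2\|g\|\}\quad\text{with }\gamma_1=\frac{\lambda_1}{2\lambda_2},\ \gamma_2=\frac{\lambda_1+2\lambda_2}{2\lambda_2(\lambda_1+\lambda_2)}.$$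
   Context: $\|\cdot\|$ denotes the Euclidean norm on vectors; the matrix norm bound $\|B+tI\|\le\lambda_2$ is used as a bound on the operator norm $\max_{h\ne0}\|(B+tI)h\|/\|h\|$ (the Frobenius norm bounds it from above). *)

theory Defs
  imports "HOL-Analysis.Analysis"
begin

definition qmodel :: "real \<Rightarrow> real^'n \<Rightarrow> real^'n^'n \<Rightarrow> real^'n \<Rightarrow> real" where
  "qmodel c g B s = c + g \<bullet> s + (1/2) * (s \<bullet> (B *v s))"

end

theory Submission
  imports Defs
begin

lemma cancel_aux:
  fixes a X Y Z :: real
  assumes "X \<noteq> 0" "Y \<noteq> 0"
  shows "a * X / Y * (Y / (Z * X)) = a / Z"
  using assms by (simp add: field_simps)

lemma real_core:
  fixes P G R q t l1 l2 a rp D :: real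
  assumes l1: "l1 > 0" and l2: "l2 > 0" and Dp: "Delta > 0"
    and q: "q \<ge> 0" and P: "P > 0" and G: "G \<ge> 0" and R: "R \<ge> 0"
    and lb: "(1/2) * q + t * P^2 \<ge> l1 * P^2"
    and gb: "G \<le> l2 * P + R"
    and rb: "R \<le> l1 / (2 * (l1 + l2)) * G"
    and rp: "rp \<le> R * P"
    and a: "a = min Delta P / P"
    and D: "D = a * (q + t * P^2 - rp) - a^2 / 2 * q"
  shows "D \<ge> l1 / (2 * l2) / 2 * G * min Delta ((l1 + 2 * l2) / (2 * l2 * (l1 + l2)) * G)"
proof -
  have a0: "a > 0" using a P Dp by auto
  have a1: "a \<le> 1" using a P by (auto simp: min_def)
  have "a^2/2 * q \<le> a/2 * q" using a0 a1 q
    by (simp add: mult_right_mono power2_eq_square mult_le_cancel_left1)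
  hence D1: "D \<ge> a * ((1/2) * q + t * P^2 - rp)" using D by (simp add: algebra_simps)
  have D2: "D \<ge> a * (l1 * P^2 - R * P)"
    using D1 lb rp a0 by (smt (verit) mult_left_mono)
  define c0 where "c0 = l1 / (2 * (l1 + l2))"
  have c0lt: "1 - c0 = (l1 + 2*l2) / (2 * (l1 + l2))" unfolding c0_def using l1 l2
    by (simp add: field_simps)
  have "G * (1 - c0) \<le> l2 * P" using gb rb unfolding c0_def by (simp add: algebra_simps)
  hence PG0: "G * (l1 + 2*l2) \<le> P * (2 * l2 * (l1 + l2))"
    using c0lt l1 l2 by (simp add: field_simps)
  hence PG: "P \<ge> (l1 + 2 * l2) / (2 * l2 * (l1 + l2)) * G"
    using l1 l2 by (simp add: pos_divide_le_eq mult.commute)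
  have RP: "R \<le> l1 * l2 / (l1 + 2*l2) * P"
  proof -
    have "R \<le> c0 * G" using rb c0_def by simp
    also have "\<dots> \<le> c0 * ((2 * l2 * (l1 + l2)) / (l1 + 2 * l2) * P)"
    proof (rule mult_left_mono)
      have "G \<le> ((2 * l2 * (l1 + l2)) * P) / (l1 + 2 * l2)" using PG0 l1 l2
        by (simp add: pos_le_divide_eq mult.commute)
      thus "G \<le> (2 * l2 * (l1 + l2)) / (l1 + 2 * l2) * P" by simp
      show "0 \<le> c0" using l1 l2 c0_def by simp
    qed
    also have "\<dots> = l1 * l2 / (l1 + 2*l2) * P" 
    proof -
      have "l1 + l2 \<noteq> 0" "l1 + 2*l2 \<noteq> 0" using l1 l2 by auto
      hence e: "l1 / (2 * (l1 + l2)) * (2 * l2 * (l1 + l2)) = l1 * l2" by (simp add: field_simps)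
      have "c0 * ((2 * l2 * (l1 + l2)) / (l1 + 2 * l2) * P) = (l1 / (2 * (l1 + l2)) * (2 * l2 * (l1 + l2))) / (l1 + 2 * l2) * P"
        unfolding c0_def by simp
      thus ?thesis by (simp only: e)
    qed
    finally show ?thesis .
  qed
  have K: "l1 * P - R \<ge> l1 * (l1 + l2) / (l1 + 2 * l2) * P"
  proof -
    have "l1 * P - l1 * l2 / (l1 + 2*l2) * P = l1 * (l1 + l2) / (l1 + 2 * l2) * P"
      using l1 l2 by (simp add: field_simps)
    thus ?thesis using RP by linarith
  qed
  have K2: "l1 * (l1 + l2) / (l1 + 2 * l2) * P \<ge> l1 / (2 * l2) * G"
  proof -
    have "l1 * (l1 + l2) / (l1 + 2 * l2) * P \<ge> l1 * (l1 + l2) / (l1 + 2 * l2) * ((l1 + 2 * l2) / (2 * l2 * (l1 + l2)) * G)"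
      using PG l1 l2 by (intro mult_left_mono) auto
    also have "l1 * (l1 + l2) / (l1 + 2 * l2) * ((l1 + 2 * l2) / (2 * l2 * (l1 + l2)) * G) = l1 / (2 * l2) * G"
    proof -
      have n: "l1 + l2 \<noteq> 0" "l1 + 2*l2 \<noteq> 0" "l2 \<noteq> 0" using l1 l2 by auto
      have "l1 * (l1 + l2) / (l1 + 2 * l2) * ((l1 + 2 * l2) / (2 * l2 * (l1 + l2))) = l1 / (2 * l2)"
        using n cancel_aux[of "l1 + l2" "l1 + 2*l2" l1 "2 * l2"] by (simp add: mult.assoc)
      thus ?thesis by (metis mult.assoc)
    qed
    finally show ?thesis .
  qed
  have aP: "a * P = min Delta P" using a P by simp
  have "a * (l1 * P^2 - R * P) = (a * P) * (l1 * P - R)" by (simp add: algebra_simps power2_eq_square)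
  also have "\<dots> \<ge> min Delta ((l1 + 2 * l2) / (2 * l2 * (l1 + l2)) * G) * (l1 / (2 * l2) * G)"
  proof (rule mult_mono)
    show "min Delta ((l1 + 2 * l2) / (2 * l2 * (l1 + l2)) * G) \<le> a * P" using aP PG by auto
    show "l1 / (2 * l2) * G \<le> l1 * P - R" using K K2 by linarith
    show "0 \<le> a * P" using a0 P by simp
    show "0 \<le> l1 / (2 * l2) * G" using l1 l2 G by simp
  qed
  finally have "D \<ge> min Delta ((l1 + 2 * l2) / (2 * l2 * (l1 + l2)) * G) * (l1 / (2 * l2) * G)"
    using D2 by linarith
  moreover have "min Delta ((l1 + 2 * l2) / (2 * l2 * (l1 + l2)) * G) * (l1 / (2 * l2) * G) \<ge> 0"
    using Dp G l1 l2 by simp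
  ultimately show ?thesis by (simp add: algebra_simps)
qed

theorem lemmaB1:
  fixes g p r :: "real^'n" and B :: "real^'n^'n" and c \<Delta> t lam1 lam2 :: real
  assumes Delta_pos: "\<Delta> > 0"
    and B_psd: "\<forall>h. h \<bullet> (B *v h) \<ge> 0"
    and t_nonneg: "t \<ge> 0"
    and lam1_pos: "lam1 > 0" and lam2_pos: "lam2 > 0"
    and lam1_bound: "\<forall>h. (1/2) * (h \<bullet> (B *v h)) + t * (norm h)^2 \<ge> lam1 * (norm h)^2"
    and lam2_bound: "onorm (\<lambda>h. (B + t *\<^sub>R mat 1) *v h) \<le> lam2"
    and p_eq: "(B + t *\<^sub>R mat 1) *v p = - g + r"
    and r_bound: "norm r \<le> lam1 / (2 * (lam1 + lam2)) * norm g"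
  shows "let s = (min \<Delta> (norm p) / norm p) *\<^sub>R p;
             gamma1 = lam1 / (2 * lam2);
             gamma2 = (lam1 + 2 * lam2) / (2 * lam2 * (lam1 + lam2))
         in qmodel c g B 0 - qmodel c g B s \<ge> gamma1 / 2 * norm g * min \<Delta> (gamma2 * norm g)"
proof -
  define A where "A = B + t *\<^sub>R mat 1"
  have Av: "A *v h = B *v h + t *\<^sub>R h" for h
  proof -
    have "(t *\<^sub>R mat 1) *v h = t *\<^sub>R (mat 1 *v h)" by (rule scaleR_matrix_vector_assoc[symmetric])
    thus ?thesis unfolding A_def by (simp add: matrix_vector_mult_add_rdistrib)
  qed
  have bl: "bounded_linear (\<lambda>h. A *v h)"
    by (simp add: linear_conv_bounded_linear matrix_vector_mul_linear)
  have Ap: "norm (A *v p) \<le> lam2 * norm p"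
  proof -
    have "onorm (\<lambda>h. A *v h) * norm p \<le> lam2 * norm p"
      using lam2_bound unfolding A_def by (intro mult_right_mono) auto
    thus ?thesis using onorm[OF bl, of p] by linarith
  qed
  have gr: "g = r - A *v p" using p_eq unfolding A_def by (simp add: algebra_simps)
  have gb: "norm g \<le> lam2 * norm p + norm r"
  proof -
    have "norm g \<le> norm r + norm (A *v p)" using gr norm_triangle_ineq4[of r "A *v p"] by simp
    thus ?thesis using Ap by linarith
  qed
  show ?thesis
  proof (cases "p = 0")
    case True
    have "norm g \<le> lam1 / (2 * (lam1 + lam2)) * norm g" using gb r_bound True by simp
    moreover have "lam1 / (2 * (lam1 + lam2)) < 1" using lam1_pos lam2_pos by simp
    ultimately have "norm g = 0"
      by (smt (verit) mult_less_cancel_right2 norm_ge_zero)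
    thus ?thesis using True by (simp add: qmodel_def Let_def)
  next
    case False
    define a where "a = min \<Delta> (norm p) / norm p"
    have gp: "- (g \<bullet> p) = p \<bullet> (B *v p) + t * (norm p)^2 - r \<bullet> p"
    proof -
      have "r = g + (B *v p + t *\<^sub>R p)" using gr Av by (simp add: algebra_simps)
      hence "r \<bullet> p = g \<bullet> p + (B *v p) \<bullet> p + t * (p \<bullet> p)"
        by (simp add: inner_add_left)
      thus ?thesis by (simp add: inner_commute power2_norm_eq_inner)
    qed
    have dec: "qmodel c g B 0 - qmodel c g B (a *\<^sub>R p)
       = a * (p \<bullet> (B *v p) + t * (norm p)^2 - r \<bullet> p) - a^2/2 * (p \<bullet> (B *v p))"
    proof -
      have Bs: "B *v (a *\<^sub>R p) = a *\<^sub>R (B *v p)"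
        by (metis matrix_scaleR_vector_ac scaleR_matrix_vector_assoc)
      show ?thesis unfolding qmodel_def using gp
        by (simp add: Bs power2_eq_square algebra_simps)
    qed
    have "qmodel c g B 0 - qmodel c g B (a *\<^sub>R p) \<ge>
       lam1 / (2 * lam2) / 2 * norm g * min \<Delta> ((lam1 + 2 * lam2) / (2 * lam2 * (lam1 + lam2)) * norm g)"
      apply (rule real_core[OF lam1_pos lam2_pos Delta_pos, where P="norm p" and R="norm r"
            and t=t and rp="r \<bullet> p" and a=a and q="p \<bullet> (B *v p)"])
      using B_psd lam1_bound False gb r_bound Cauchy_Schwarz_ineq2[of r p] a_def dec
      by auto
    thus ?thesis unfolding a_def Let_def .
  qed
qed

end
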